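(* Let $S,T>0$ and for $u\in C([0,S])$ define $(\mathcal{A}u)(s)=\int_0^1u(sr)\,dr$, $s\in[0,S]$. Suppose $U,V\in C^1([0,T],C([0,S]))$ satisfy: (i) $U(s,0)\ge V(s,0)$ for all $s\in[0,S]$; (ii) for all $(s,t)\in[0,S]\times[0,T]$, $$\partial_tU+U^2+U=2\mathcal{A}U+F,\qquad \partial_tV+V^2+V=2\mathcal{A}V+G,$$ where $F\ge G$. Then $U\ge V$ everywhere in $[0,S]\times[0,T]$. *)

theory Defs
  imports "HOL-Analysis.Analysis"
begin

definition avg_op :: "(real \<Rightarrow> real) \<Rightarrow> real \<Rightarrow> real" where
  "avg_op u s = integral {0..1} (\<lambda>r. u (s * r))"

text \<open>A function U(s,t) (written U s t), viewed as the map t |-> U(.,t) from [0,T]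
  into C([0,S]) with the sup norm, is C^1 with time derivative Ut:
  U and Ut are (jointly) continuous on [0,S] x [0,T] (equivalently, t |-> U(.,t) and
  t |-> Ut(.,t) are continuous into C([0,S])), and for every t in [0,T] the difference
  quotients converge to Ut(.,t) uniformly in s in [0,S] (one-sided at the endpoints).\<close>
definition C1_into_C :: "real \<Rightarrow> real \<Rightarrow> (real \<Rightarrow> real \<Rightarrow> real) \<Rightarrow> (real \<Rightarrow> real \<Rightarrow> real) \<Rightarrow> bool" where
  "C1_into_C S T U Ut \<longleftrightarrow>
     continuous_on ({0..S} \<times> {0..T}) (\<lambda>(s, t). U s t) \<and>
     continuous_on ({0..S} \<times> {0..T}) (\<lambda>(s, t). Ut s t) \<and>
     (\<forall>t\<in>{0..T}. uniform_limit {0..S} (\<lambda>h s. (U s (t + h) - U s t) / h) (\<lambda>s. Ut s t)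
                     (at 0 within {-t..T - t}))"

end

theory Submission
  imports Defs
begin

lemma aux_mul_le: "0 \<le> (s::real) \<Longrightarrow> s \<le> S \<Longrightarrow> 0 \<le> r \<Longrightarrow> r \<le> 1 \<Longrightarrow> s * r \<le> S"
  by (metis mult_left_le order_trans)

theorem proposition6p1:
  fixes S T :: real and U V Ut Vt F G :: "real \<Rightarrow> real \<Rightarrow> real"
  assumes "S > 0" and "T > 0"
    and "C1_into_C S T U Ut" and "C1_into_C S T V Vt"
    and "\<forall>s\<in>{0..S}. U s 0 \<ge> V s 0"
    and "\<forall>s\<in>{0..S}. \<forall>t\<in>{0..T}.
           Ut s t + (U s t)\<^sup>2 + U s t = 2 * avg_op (\<lambda>x. U x t) s + F s t"
    and "\<forall>s\<in>{0..S}. \<forall>t\<in>{0..T}.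
           Vt s t + (V s t)\<^sup>2 + V s t = 2 * avg_op (\<lambda>x. V x t) s + G s t"
    and "\<forall>s\<in>{0..S}. \<forall>t\<in>{0..T}. F s t \<ge> G s t"
  shows "\<forall>s\<in>{0..S}. \<forall>t\<in>{0..T}. U s t \<ge> V s t"
proof -
  define R where "R = {0..S} \<times> {0..T}"
  have cR: "compact R" unfolding R_def by (intro compact_Times compact_Icc)
  have cU: "continuous_on R (\<lambda>p. U (fst p) (snd p))"
    using assms(3) unfolding C1_into_C_def R_def by (simp add: case_prod_beta')
  have cV: "continuous_on R (\<lambda>p. V (fst p) (snd p))"
    using assms(4) unfolding C1_into_C_def R_def by (simp add: case_prod_beta')
  have dU: "\<forall>t\<in>{0..T}. uniform_limit {0..S} (\<lambda>h s. (U s (t + h) - U s t) / h) (\<lambda>s. Ut s t)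
                     (at 0 within {-t..T - t})"
    using assms(3) unfolding C1_into_C_def by blast
  have dV: "\<forall>t\<in>{0..T}. uniform_limit {0..S} (\<lambda>h s. (V s (t + h) - V s t) / h) (\<lambda>s. Vt s t)
                     (at 0 within {-t..T - t})"
    using assms(4) unfolding C1_into_C_def by blast
  obtain BU where BU: "\<forall>x\<in>(\<lambda>p. U (fst p) (snd p)) ` R. \<bar>x\<bar> \<le> BU"
    using compact_imp_bounded[OF compact_continuous_image[OF cU cR]] bounded_real by blast
  obtain BV where BV: "\<forall>x\<in>(\<lambda>p. V (fst p) (snd p)) ` R. \<bar>x\<bar> \<le> BV"
    using compact_imp_bounded[OF compact_continuous_image[OF cV cR]] bounded_real by blast
  define B where "B = max 0 (max BU BV)"
  have bU: "\<bar>U s t\<bar> \<le> B" if "s \<in> {0..S}" "t \<in> {0..T}" for s t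
    using BU that unfolding B_def R_def by force
  have bV: "\<bar>V s t\<bar> \<le> B" if "s \<in> {0..S}" "t \<in> {0..T}" for s t
    using BV that unfolding B_def R_def by force
  define K where "K = 2 * B + 3"
  have main: "U s t - V s t + e * exp (K * t) > 0"
    if e: "e > 0" and st: "s \<in> {0..S}" "t \<in> {0..T}" for e s t
  proof (rule ccontr)
    assume neg: "\<not> ?thesis"
    define Z where "Z = (\<lambda>s t. U s t - V s t + e * exp (K * t))"
    have cZ: "continuous_on R (\<lambda>p. Z (fst p) (snd p))"
      unfolding Z_def by (intro continuous_intros cU cV)
    define KK where "KK = R \<inter> (\<lambda>p. Z (fst p) (snd p)) -` {..0}"
    have "closed KK" unfolding KK_def
      by (rule continuous_closed_preimage[OF cZ compact_imp_closed[OF cR]]) auto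
    hence cKK: "compact KK"
      using compact_Int_closed[OF cR, of KK] unfolding KK_def by (simp add: Int_absorb Int_assoc[symmetric])
    have "(s,t) \<in> KK" using neg st unfolding KK_def R_def Z_def by auto
    hence "KK \<noteq> {}" by blast
    then obtain p where pK: "p \<in> KK" and pmin: "\<forall>q\<in>KK. snd p \<le> snd q"
      using continuous_attains_inf[OF cKK _ continuous_on_snd[OF continuous_on_id]] by blast
    obtain s0 t0 where p: "p = (s0, t0)" by (cases p)
    have s0: "s0 \<in> {0..S}" and t0: "t0 \<in> {0..T}" and Z0: "Z s0 t0 \<le> 0"
      using pK unfolding p KK_def R_def by auto
    have pos_before: "Z x y > 0" if "x \<in> {0..S}" "y \<in> {0..T}" "y < t0" for x y
    proof (rule ccontr)
      assume "\<not> Z x y > 0"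
      hence "(x,y) \<in> KK" using that unfolding KK_def R_def by auto
      thus False using pmin that unfolding p by force
    qed
    have Zinit: "Z x 0 > 0" if "x \<in> {0..S}" for x
      using assms(5) that e unfolding Z_def by force
    have t0pos: "t0 > 0"
    proof (rule ccontr)
      assume "\<not> t0 > 0" hence "t0 = 0" using t0 by auto
      thus False using Zinit[OF s0] Z0 by auto
    qed
    have contZx: "continuous_on {0..T} (\<lambda>y. Z x y)" if "x \<in> {0..S}" for x
    proof -
      have "continuous_on {0..T} ((\<lambda>p. Z (fst p) (snd p)) \<circ> (\<lambda>y. (x, y)))"
        by (rule continuous_on_compose[OF _ continuous_on_subset[OF cZ]])
           (use that in \<open>auto intro!: continuous_intros simp: R_def\<close>)
      thus ?thesis by (simp add: o_def)
    qed
    have Zeq0: "Z s0 t0 = 0"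
    proof (rule ccontr)
      assume "Z s0 t0 \<noteq> 0" hence "Z s0 t0 < 0" using Z0 by auto
      then obtain y where y: "0 \<le> y" "y \<le> t0" "Z s0 y = 0"
        using IVT2'[of "\<lambda>y. Z s0 y" t0 0 0] Zinit[OF s0] t0
          continuous_on_subset[OF contZx[OF s0], of "{0..t0}"] by auto
      have "y \<noteq> t0" using y \<open>Z s0 t0 < 0\<close> by auto
      thus False using pos_before[OF s0, of y] y t0 by auto
    qed
    have Zt0: "Z x t0 \<ge> 0" if x: "x \<in> {0..S}" for x
    proof (rule ccontr)
      assume "\<not> Z x t0 \<ge> 0" hence "Z x t0 < 0" by auto
      then obtain y where y: "0 \<le> y" "y \<le> t0" "Z x y = 0"
        using IVT2'[of "\<lambda>y. Z x y" t0 0 0] Zinit[OF x] t0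
          continuous_on_subset[OF contZx[OF x], of "{0..t0}"] by auto
      have "y \<noteq> t0" using y \<open>Z x t0 < 0\<close> by auto
      thus False using pos_before[OF x, of y] y t0 by auto
    qed
    define E where "E = e * exp (K * t0)"
    have Epos: "E > 0" using e unfolding E_def by auto
    have W0: "U s0 t0 - V s0 t0 = - E" using Zeq0 unfolding Z_def E_def by auto
    define FL where "FL = at (0::real) within {-t0..<0}"
    have FLsub: "FL \<le> at 0 within {-t0..T - t0}" unfolding FL_def
      by (rule at_le) (use t0 in auto)
    have FLnt: "FL \<noteq> bot" unfolding FL_def
    proof -
      have "(0::real) islimpt {-t0..<0}"
        using t0pos islimpt_Ico[of "-t0" 0 0] by simp
      thus "at (0::real) within {-t0..<0} \<noteq> bot" by (simp add: trivial_limit_within)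
    qed
    have limU: "((\<lambda>h. (U s0 (t0 + h) - U s0 t0) / h) \<longlongrightarrow> Ut s0 t0) FL"
      using tendsto_mono[OF FLsub tendsto_uniform_limitI[OF dU[rule_format, OF t0] s0]] .
    have limV: "((\<lambda>h. (V s0 (t0 + h) - V s0 t0) / h) \<longlongrightarrow> Vt s0 t0) FL"
      using tendsto_mono[OF FLsub tendsto_uniform_limitI[OF dV[rule_format, OF t0] s0]] .
    have "DERIV (\<lambda>y. e * exp (K * y)) t0 :> e * (exp (K * t0) * K)"
      by (auto intro!: derivative_eq_intros)
    hence limE: "((\<lambda>h. (e * exp (K * (t0 + h)) - e * exp (K * t0)) / h) \<longlongrightarrow> e * (exp (K * t0) * K)) FL"
      unfolding DERIV_def FL_def by (rule tendsto_mono[rotated]) (rule at_le, auto)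
    have limZ: "((\<lambda>h. (Z s0 (t0 + h) - Z s0 t0) / h) \<longlongrightarrow> Ut s0 t0 - Vt s0 t0 + e * (exp (K * t0) * K)) FL"
    proof -
      have "((\<lambda>h. (U s0 (t0 + h) - U s0 t0) / h - (V s0 (t0 + h) - V s0 t0) / h
          + (e * exp (K * (t0 + h)) - e * exp (K * t0)) / h) \<longlongrightarrow> Ut s0 t0 - Vt s0 t0 + e * (exp (K * t0) * K)) FL"
        by (intro tendsto_add tendsto_diff limU limV limE)
      thus ?thesis unfolding Z_def by (simp add: diff_divide_distrib add_divide_distrib algebra_simps)
    qed
    have evq: "eventually (\<lambda>h. (Z s0 (t0 + h) - Z s0 t0) / h \<le> 0) FL"
      unfolding FL_def eventually_at_filter
    proof (intro always_eventually allI impI)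
      fix h :: real assume h: "h \<in> {-t0..<0}"
      have "Z s0 (t0 + h) > 0" using pos_before[OF s0, of "t0 + h"] h t0 by auto
      thus "(Z s0 (t0 + h) - Z s0 t0) / h \<le> 0" using h Zeq0 by (simp add: divide_pos_neg less_imp_le)
    qed
    have Dle: "Ut s0 t0 - Vt s0 t0 + e * (exp (K * t0) * K) \<le> 0"
      using tendsto_upperbound[OF limZ evq FLnt] .
    have intU: "(\<lambda>r. U (s0 * r) t0) integrable_on {0..1}" and intV: "(\<lambda>r. V (s0 * r) t0) integrable_on {0..1}"
    proof -
      have sub: "(\<lambda>r. (s0 * r, t0)) ` {0..1} \<subseteq> R"
        using s0 t0 unfolding R_def by (auto intro: aux_mul_le)
      have "continuous_on {0..1} ((\<lambda>p. U (fst p) (snd p)) \<circ> (\<lambda>r. (s0 * r, t0)))"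
        by (rule continuous_on_compose[OF _ continuous_on_subset[OF cU sub]]) (auto intro!: continuous_intros)
      thus "(\<lambda>r. U (s0 * r) t0) integrable_on {0..1}" by (auto simp: o_def intro: integrable_continuous_real)
      have "continuous_on {0..1} ((\<lambda>p. V (fst p) (snd p)) \<circ> (\<lambda>r. (s0 * r, t0)))"
        by (rule continuous_on_compose[OF _ continuous_on_subset[OF cV sub]]) (auto intro!: continuous_intros)
      thus "(\<lambda>r. V (s0 * r) t0) integrable_on {0..1}" by (auto simp: o_def intro: integrable_continuous_real)
    qed
    have avgdiff: "avg_op (\<lambda>x. U x t0) s0 - avg_op (\<lambda>x. V x t0) s0 = integral {0..1} (\<lambda>r. U (s0 * r) t0 - V (s0 * r) t0)"
      unfolding avg_op_def using integral_diff[OF intU intV] by simp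
    have "integral {0..1} (\<lambda>r::real. - E) \<le> integral {0..1} (\<lambda>r. U (s0 * r) t0 - V (s0 * r) t0)"
    proof (rule Henstock_Kurzweil_Integration.integral_le)
      show "(\<lambda>r. U (s0 * r) t0 - V (s0 * r) t0) integrable_on {0..1}" using intU intV by (rule integrable_diff)
      show "(\<lambda>r::real. - E) integrable_on {0..1}" by (rule integrable_continuous_real) (rule continuous_on_const)
      show "- E \<le> U (s0 * r) t0 - V (s0 * r) t0" if r: "r \<in> {0..1}" for r
      proof -
        have "s0 * r \<in> {0..S}" using s0 r by (auto intro: aux_mul_le)
        thus ?thesis using Zt0 unfolding Z_def E_def by force
      qed
    qed
    hence avgge: "avg_op (\<lambda>x. U x t0) s0 - avg_op (\<lambda>x. V x t0) s0 \<ge> - E"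
      using avgdiff by simp
    have eqU: "Ut s0 t0 = 2 * avg_op (\<lambda>x. U x t0) s0 + F s0 t0 - (U s0 t0)\<^sup>2 - U s0 t0"
      using assms(6) s0 t0 by force
    have eqV: "Vt s0 t0 = 2 * avg_op (\<lambda>x. V x t0) s0 + G s0 t0 - (V s0 t0)\<^sup>2 - V s0 t0"
      using assms(7) s0 t0 by force
    have FG: "F s0 t0 \<ge> G s0 t0" using assms(8) s0 t0 by force
    have sq: "(U s0 t0)\<^sup>2 - (V s0 t0)\<^sup>2 + (U s0 t0 - V s0 t0) = - E * (U s0 t0 + V s0 t0 + 1)"
    proof -
      have "(U s0 t0)\<^sup>2 - (V s0 t0)\<^sup>2 + (U s0 t0 - V s0 t0) = (U s0 t0 - V s0 t0) * (U s0 t0 + V s0 t0 + 1)"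
        by (simp add: power2_eq_square algebra_simps)
      thus ?thesis using W0 by simp
    qed
    have c: "U s0 t0 + V s0 t0 + 1 \<ge> - 2 * B" using bU[OF s0 t0] bV[OF s0 t0] by auto
    have "- E * (U s0 t0 + V s0 t0 + 1) \<le> 2 * B * E"
      using mult_left_mono[OF c, of E] Epos by (simp add: algebra_simps)
    hence "Ut s0 t0 - Vt s0 t0 \<ge> - 2 * E - 2 * B * E"
      using eqU eqV FG sq avgge by (simp add: algebra_simps)
    moreover have "e * (exp (K * t0) * K) = E * (2 * B + 3)" unfolding E_def K_def by simp
    ultimately have "Ut s0 t0 - Vt s0 t0 + e * (exp (K * t0) * K) \<ge> E"
      by (simp add: algebra_simps)
    thus False using Dle Epos by linarith
  qed
  show ?thesis
  proof (intro ballI, rule ccontr)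
    fix s t assume st: "s \<in> {0..S}" "t \<in> {0..T}" and n: "\<not> V s t \<le> U s t"
    define e where "e = (V s t - U s t) / (2 * exp (K * t))"
    have e: "e > 0" using n unfolding e_def by auto
    have eq: "e * exp (K * t) = (V s t - U s t) / 2" unfolding e_def by simp
    have "0 < U s t - V s t + (V s t - U s t) / 2" using main[OF e st] unfolding eq .
    thus False using n by (simp add: field_simps)
  qed
qed

end
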